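(* LFI3 is maximal with respect to LFI1; that is, LFI3 is a proper sublogic of LFI1, and for every formula $\alpha$ such that $\vDash_{LFI1}\alpha$ but $\not\vDash_{LFI3}\alpha$, the logic obtained from LFI3 by adding $\alpha$ as a theorem schema (all of its substitution instances as theorems) coincides with LFI1.
   Context: Formulas are built from a countable set of propositional variables using unary $\neg,\circ$ and binary $\land,\lor,\to$. On $\{0,1\}$ use Boolean $\land,\lor,\to,\sim$. Let $\mathbb{B}=\{x\in\{0,1\}^3: x_1\lor x_2=1,\ x_3\lor\sim(x_1\land x_2)=1\}=\{T,t,b,f,F\}$ with $T=(1,0,0)$, $t=(1,0,1)$, $b=(1,1,1)$, $f=(0,1,1)$, $F=(0,1,0)$. The LFI3 algebra on $\mathbb{B}$ has operations: $a\dot\land b=(a_1\land b_1,\ a_2\lor b_2,\ (\sim a_2\land b_3)\lor(a_3\land\sim b_2)\lor(a_3\land b_3))$; $a\dot\lor b=(a_1\lor b_1,\ a_2\land b_2,\ (\sim a_1\land b_3)\lor(a_3\land\sim b_1)\lor(a_3\land b_3))$; $a\dot\to b=(a_1\to b_1,\ b_2\land(\sim a_2\lor a_3),\ (\sim a_2\land b_3)\lor(\sim a_2\land a_3\land\sim b_1)\lor(a_3\land b_3)\lor(\sim a_1\land a_3\land\sim b_1))$; $\dot\neg a=(a_2,a_1,a_3)$; $\dot\circ a=(\sim(a_1\land a_2),a_3,a_3\land\sim(a_1\land a_2))$. Designated set $D=\{T,t,b\}$; LFI3 is the matrix logic of this algebra with $D$. LFI1 is the three-valued matrix logic on $\{1,\frac12,0\}$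 with designated set $\{1,\frac12\}$, $\land=\min$, $\lor=\max$ (order $0<\frac12<1$), $a\to c=1$ if $a=0$ and $a\to c=c$ otherwise, $\neg1=0$, $\neg\frac12=\frac12$, $\neg0=1$, $\circ1=\circ0=1$, $\circ\frac12=0$. For matrix logics, $\Gamma\vDash\alpha$ means every homomorphic valuation designating all of $\Gamma$ designates $\alpha$; "sublogic" means inclusion of consequence relations. *)

theory Defs
  imports Main
begin

datatype fm = Var nat | Neg fm | Circ fm | Conj fm fm | Disj fm fm | Impl fm fm

primrec subst :: "(nat \<Rightarrow> fm) \<Rightarrow> fm \<Rightarrow> fm" where
  "subst s (Var n) = s n"
| "subst s (Neg a) = Neg (subst s a)"
| "subst s (Circ a) = Circ (subst s a)"
| "subst s (Conj a b) = Conj (subst s a) (subst s b)"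
| "subst s (Disj a b) = Disj (subst s a) (subst s b)"
| "subst s (Impl a b) = Impl (subst s a) (subst s b)"

type_synonym trip = "bool \<times> bool \<times> bool"

definition p1 :: "trip \<Rightarrow> bool" where "p1 x = fst x"
definition p2 :: "trip \<Rightarrow> bool" where "p2 x = fst (snd x)"
definition p3 :: "trip \<Rightarrow> bool" where "p3 x = snd (snd x)"

definition Bset :: "trip set" where
  "Bset = {x. (p1 x \<or> p2 x) \<and> (p3 x \<or> \<not> (p1 x \<and> p2 x))}"

definition vT :: trip where "vT = (True, False, False)"
definition vt :: trip where "vt = (True, False, True)"
definition vb :: trip where "vb = (True, True, True)"
definition vf :: trip where "vf = (False, True, True)"
definition vF :: trip where "vF = (False, True, False)"

definition and3 :: "trip \<Rightarrow> trip \<Rightarrow> trip" where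
  "and3 a b = (p1 a \<and> p1 b, p2 a \<or> p2 b,
     (\<not> p2 a \<and> p3 b) \<or> (p3 a \<and> \<not> p2 b) \<or> (p3 a \<and> p3 b))"

definition or3 :: "trip \<Rightarrow> trip \<Rightarrow> trip" where
  "or3 a b = (p1 a \<or> p1 b, p2 a \<and> p2 b,
     (\<not> p1 a \<and> p3 b) \<or> (p3 a \<and> \<not> p1 b) \<or> (p3 a \<and> p3 b))"

definition imp3 :: "trip \<Rightarrow> trip \<Rightarrow> trip" where
  "imp3 a b = (p1 a \<longrightarrow> p1 b, p2 b \<and> (\<not> p2 a \<or> p3 a),
     (\<not> p2 a \<and> p3 b) \<or> (\<not> p2 a \<and> p3 a \<and> \<not> p1 b) \<or> (p3 a \<and> p3 b)
       \<or> (\<not> p1 a \<and> p3 a \<and> \<not> p1 b))"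

definition neg3 :: "trip \<Rightarrow> trip" where
  "neg3 a = (p2 a, p1 a, p3 a)"

definition circ3 :: "trip \<Rightarrow> trip" where
  "circ3 a = (\<not> (p1 a \<and> p2 a), p3 a, p3 a \<and> \<not> (p1 a \<and> p2 a))"

primrec ev3 :: "(nat \<Rightarrow> trip) \<Rightarrow> fm \<Rightarrow> trip" where
  "ev3 e (Var n) = e n"
| "ev3 e (Neg a) = neg3 (ev3 e a)"
| "ev3 e (Circ a) = circ3 (ev3 e a)"
| "ev3 e (Conj a b) = and3 (ev3 e a) (ev3 e b)"
| "ev3 e (Disj a b) = or3 (ev3 e a) (ev3 e b)"
| "ev3 e (Impl a b) = imp3 (ev3 e a) (ev3 e b)"

definition D3 :: "trip set" where "D3 = {vT, vt, vb}"

definition cons_LFI3 :: "fm set \<Rightarrow> fm \<Rightarrow> bool" where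
  "cons_LFI3 \<Gamma> \<phi> \<longleftrightarrow>
     (\<forall>e. (\<forall>n. e n \<in> Bset) \<longrightarrow> (\<forall>\<gamma>\<in>\<Gamma>. ev3 e \<gamma> \<in> D3) \<longrightarrow> ev3 e \<phi> \<in> D3)"

datatype v3 = Zero | Half | One

definition rk :: "v3 \<Rightarrow> nat" where
  "rk x = (case x of Zero \<Rightarrow> 0 | Half \<Rightarrow> 1 | One \<Rightarrow> 2)"

definition and1 :: "v3 \<Rightarrow> v3 \<Rightarrow> v3" where
  "and1 a b = (if rk a \<le> rk b then a else b)"
definition or1 :: "v3 \<Rightarrow> v3 \<Rightarrow> v3" where
  "or1 a b = (if rk a \<le> rk b then b else a)"
definition imp1 :: "v3 \<Rightarrow> v3 \<Rightarrow> v3" where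
  "imp1 a c = (if a = Zero then One else c)"
definition neg1 :: "v3 \<Rightarrow> v3" where
  "neg1 a = (case a of One \<Rightarrow> Zero | Half \<Rightarrow> Half | Zero \<Rightarrow> One)"
definition circ1 :: "v3 \<Rightarrow> v3" where
  "circ1 a = (case a of One \<Rightarrow> One | Half \<Rightarrow> Zero | Zero \<Rightarrow> One)"

primrec ev1 :: "(nat \<Rightarrow> v3) \<Rightarrow> fm \<Rightarrow> v3" where
  "ev1 e (Var n) = e n"
| "ev1 e (Neg a) = neg1 (ev1 e a)"
| "ev1 e (Circ a) = circ1 (ev1 e a)"
| "ev1 e (Conj a b) = and1 (ev1 e a) (ev1 e b)"
| "ev1 e (Disj a b) = or1 (ev1 e a) (ev1 e b)"
| "ev1 e (Impl a b) = imp1 (ev1 e a) (ev1 e b)"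

definition D1 :: "v3 set" where "D1 = {One, Half}"

definition cons_LFI1 :: "fm set \<Rightarrow> fm \<Rightarrow> bool" where
  "cons_LFI1 \<Gamma> \<phi> \<longleftrightarrow> (\<forall>e. (\<forall>\<gamma>\<in>\<Gamma>. ev1 e \<gamma> \<in> D1) \<longrightarrow> ev1 e \<phi> \<in> D1)"

definition sublogic :: "(fm set \<Rightarrow> fm \<Rightarrow> bool) \<Rightarrow> (fm set \<Rightarrow> fm \<Rightarrow> bool) \<Rightarrow> bool" where
  "sublogic L L' \<longleftrightarrow> (\<forall>\<Gamma> \<phi>. L \<Gamma> \<phi> \<longrightarrow> L' \<Gamma> \<phi>)"

definition proper_sublogic :: "(fm set \<Rightarrow> fm \<Rightarrow> bool) \<Rightarrow> (fm set \<Rightarrow> fm \<Rightarrow> bool) \<Rightarrow> bool" where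
  "proper_sublogic L L' \<longleftrightarrow> sublogic L L' \<and> L \<noteq> L'"

definition ax_ext :: "(fm set \<Rightarrow> fm \<Rightarrow> bool) \<Rightarrow> fm \<Rightarrow> fm set \<Rightarrow> fm \<Rightarrow> bool" where
  "ax_ext L \<alpha> \<Gamma> \<phi> \<longleftrightarrow> L (\<Gamma> \<union> range (\<lambda>s. subst s \<alpha>)) \<phi>"

end

theory Submission
  imports Defs
begin

definition h :: "v3 \<Rightarrow> trip" where
  "h x = (case x of One \<Rightarrow> vT | Half \<Rightarrow> vb | Zero \<Rightarrow> vF)"

definition g :: "trip \<Rightarrow> v3" where
  "g x = (if x = vT then One else if x = vb then Half else Zero)"

lemmas alldefs = h_def p1_def p2_def p3_def vT_def vt_def vb_def vf_def vF_def
  and3_def or3_def imp3_def neg3_def circ3_def and1_def or1_def imp1_def neg1_def circ1_def rk_def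

lemma ev3_h: "ev3 (h \<circ> e) \<phi> = h (ev1 e \<phi>)"
proof (induction \<phi>)
  case (Var n) then show ?case by simp
next
  case (Neg a) then show ?case by (cases "ev1 e a") (simp_all add: alldefs)
next
  case (Circ a) then show ?case by (cases "ev1 e a") (simp_all add: alldefs)
next
  case (Conj a b) then show ?case
    by (cases "ev1 e a"; cases "ev1 e b") (simp_all add: alldefs)
next
  case (Disj a b) then show ?case
    by (cases "ev1 e a"; cases "ev1 e b") (simp_all add: alldefs)
next
  case (Impl a b) then show ?case
    by (cases "ev1 e a"; cases "ev1 e b") (simp_all add: alldefs)
qed

lemma h_D: "h x \<in> D3 \<longleftrightarrow> x \<in> D1"
  by (cases x) (simp_all add: alldefs D3_def D1_def)

lemma h_B: "h x \<in> Bset"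
  by (cases x) (simp_all add: alldefs Bset_def)

lemma Bset_cases: "x \<in> Bset \<longleftrightarrow> x \<in> {vT, vt, vb, vf, vF}"
  by (cases x) (auto simp add: alldefs Bset_def)

lemma ev3_subst: "ev3 e (subst s a) = ev3 (\<lambda>n. ev3 e (s n)) a"
  by (induction a) simp_all

lemma ev1_subst: "ev1 e (subst s a) = ev1 (\<lambda>n. ev1 e (s n)) a"
  by (induction a) simp_all

definition rep :: "trip \<Rightarrow> fm \<Rightarrow> fm" where
  "rep x Q = (if x = vt then Q else if x = vf then Neg Q else if x = vb then Circ Q
     else if x = vF then Circ (Circ Q) else Neg (Circ (Circ Q)))"

lemma rep_ok: "ev3 e Q = vt \<Longrightarrow> x \<in> Bset \<Longrightarrow> ev3 e (rep x Q) = x"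
  unfolding Bset_cases rep_def by (auto simp add: alldefs)

lemma LFI3_to_LFI1:
  assumes "cons_LFI3 (\<Gamma> \<union> A) \<phi>" and "\<forall>a\<in>A. cons_LFI1 {} a"
  shows "cons_LFI1 \<Gamma> \<phi>"
  unfolding cons_LFI1_def
proof (intro allI impI)
  fix e1 assume G: "\<forall>\<gamma>\<in>\<Gamma>. ev1 e1 \<gamma> \<in> D1"
  have "ev3 (h \<circ> e1) \<phi> \<in> D3"
    using assms(1) unfolding cons_LFI3_def
  proof (elim allE impE)
    show "\<forall>n. (h \<circ> e1) n \<in> Bset" by (simp add: h_B)
    show "\<forall>\<gamma>\<in>\<Gamma> \<union> A. ev3 (h \<circ> e1) \<gamma> \<in> D3"
      using G assms(2) by (auto simp add: ev3_h h_D cons_LFI1_def)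
  qed
  then show "ev1 e1 \<phi> \<in> D1" by (simp add: ev3_h h_D)
qed

lemma circcirc: "\<not> cons_LFI3 {} (Circ (Circ (Var 0)))"
  unfolding cons_LFI3_def
  apply (simp)
  apply (rule exI[of _ "\<lambda>_. vt"])
  apply (simp add: Bset_cases D3_def alldefs)
  done

lemma circcirc1: "cons_LFI1 {} (Circ (Circ (Var 0)))"
  unfolding cons_LFI1_def
  by (auto simp: D1_def circ1_def split: v3.splits)

theorem theorem14:
  shows "proper_sublogic cons_LFI3 cons_LFI1 \<and>
    (\<forall>\<alpha>. cons_LFI1 {} \<alpha> \<and> \<not> cons_LFI3 {} \<alpha> \<longrightarrow> ax_ext cons_LFI3 \<alpha> = cons_LFI1)"
proof (intro conjI allI impI)
  show "proper_sublogic cons_LFI3 cons_LFI1"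
    unfolding proper_sublogic_def sublogic_def
  proof (intro conjI allI impI)
    fix \<Gamma> \<phi> assume "cons_LFI3 \<Gamma> \<phi>"
    then show "cons_LFI1 \<Gamma> \<phi>" using LFI3_to_LFI1[of \<Gamma> "{}" \<phi>] by simp
  next
    show "cons_LFI3 \<noteq> cons_LFI1" using circcirc circcirc1 by metis
  qed
next
  fix \<alpha> assume a: "cons_LFI1 {} \<alpha> \<and> \<not> cons_LFI3 {} \<alpha>"
  then obtain e0 where e0B: "\<forall>n. e0 n \<in> Bset" and e0a: "ev3 e0 \<alpha> \<notin> D3"
    unfolding cons_LFI3_def by auto
  have inst1: "\<forall>x\<in>range (\<lambda>s. subst s \<alpha>). cons_LFI1 {} x"
    using a unfolding cons_LFI1_def by (auto simp: ev1_subst)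
  show "ax_ext cons_LFI3 \<alpha> = cons_LFI1"
  proof (intro ext iffI)
    fix \<Gamma> \<phi> assume "ax_ext cons_LFI3 \<alpha> \<Gamma> \<phi>"
    then show "cons_LFI1 \<Gamma> \<phi>" using LFI3_to_LFI1 inst1 unfolding ax_ext_def by blast
  next
    fix \<Gamma> \<phi> assume L1: "cons_LFI1 \<Gamma> \<phi>"
    show "ax_ext cons_LFI3 \<alpha> \<Gamma> \<phi>"
      unfolding ax_ext_def cons_LFI3_def
    proof (intro allI impI)
      fix e assume eB: "\<forall>n. e n \<in> Bset"
        and des: "\<forall>\<gamma>\<in>\<Gamma> \<union> range (\<lambda>s. subst s \<alpha>). ev3 e \<gamma> \<in> D3"
      have small: "e n \<in> {vT, vb, vF}" for n
      proof (rule ccontr)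
        assume "e n \<notin> {vT, vb, vF}"
        then have "e n = vt \<or> e n = vf" using eB Bset_cases by auto
        then obtain Q where Q: "ev3 e Q = vt"
          by (metis ev3.simps(1) ev3.simps(2) neg3_def p1_def p2_def p3_def vt_def vf_def
              fst_conv snd_conv)
        define s where "s = (\<lambda>m. rep (e0 m) Q)"
        have "ev3 e (subst s \<alpha>) = ev3 e0 \<alpha>"
          unfolding ev3_subst s_def using rep_ok[OF Q] e0B by simp
        moreover have "ev3 e (subst s \<alpha>) \<in> D3" using des by auto
        ultimately show False using e0a by simp
      qed
      define e1 where "e1 = (\<lambda>n. g (e n))"
      have he: "h \<circ> e1 = e"
      proof
        fix n show "(h \<circ> e1) n = e n" using small[of n]
          by (auto simp: e1_def g_def h_def vT_def vb_def vF_def)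
      qed
      have "ev1 e1 \<phi> \<in> D1" using L1 unfolding cons_LFI1_def
        using des by (metis UnI1 ev3_h he h_D)
      then show "ev3 e \<phi> \<in> D3" by (metis ev3_h he h_D)
    qed
  qed
qed

end
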